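(* Let $a,b>0$, $D=[0,a]\times[0,b]$, and let $f:D\to\mathbb{R}$ be a $C^3$ function. Let $p\in\operatorname{int}D$ be a local maximum of $f$ at which the Hessian of $f$ is negative definite. Then there exist a neighborhood $U$ of $p$ and a number $r>0$ such that for every sufficiently large $n$ for which $D_n$ is nondegenerate, there is exactly one grid vertex $p_{i,j}$ of $D_n$ in $U$ which is maximal within its grid circle $C_r(p_{i,j})$.
   Context: For $n\ge1$, $D_n$ denotes the division of $D$ into $n\times n$ congruent rectangles; its grid vertices are the points $p_{i,j}=\left(\frac{i}{n}a,\frac{j}{n}b\right)$, $0\le i,j\le n$. $D_n$ is called nondegenerate if $f(p)\neq f(p')$ for any two distinct grid vertices $p\neq p'$ of $D_n$. The grid circle of centre $p_{i,j}$ and radius $r$ is $C_r(p_{i,j})=\{p_{l,m}: 0\le l,m\le n,\ \max\{|l-i|,|m-j|\}\le r\}$. A grid vertex $p_{i,j}$ is minimal (resp. maximal) within $C_r(p_{i,j})$ if $f(p_{i,j})\le f(q)$ (resp. $f(p_{i,j})\ge f(q)$) for every $q\in C_r(p_{i,j})$. *)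

theory Defs
  imports "HOL-Analysis.Analysis"
begin

definition pd1 :: "(real \<times> real \<Rightarrow> real) \<Rightarrow> real \<times> real \<Rightarrow> real" where
  "pd1 f x = deriv (\<lambda>t. f (t, snd x)) (fst x)"

definition pd2 :: "(real \<times> real \<Rightarrow> real) \<Rightarrow> real \<times> real \<Rightarrow> real" where
  "pd2 f x = deriv (\<lambda>t. f (fst x, t)) (snd x)"

fun Ck :: "nat \<Rightarrow> (real \<times> real) set \<Rightarrow> (real \<times> real \<Rightarrow> real) \<Rightarrow> bool" where
  "Ck 0 S f = continuous_on S f"
| "Ck (Suc k) S f =
     (continuous_on S f \<and>
      (\<forall>x\<in>S. (\<lambda>t. f (t, snd x)) differentiable (at (fst x))
             \<and> (\<lambda>t. f (fst x, t)) differentiable (at (snd x)))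
      \<and> Ck k S (pd1 f) \<and> Ck k S (pd2 f))"

text \<open>Hessian matrix (index 0 = first coordinate, 1 = second coordinate);
  entry (i,j) is the derivative in direction j of the derivative in direction i.\<close>

definition pd :: "nat \<Rightarrow> (real \<times> real \<Rightarrow> real) \<Rightarrow> real \<times> real \<Rightarrow> real" where
  "pd i f = (if i = 0 then pd1 f else pd2 f)"

definition hessian :: "(real \<times> real \<Rightarrow> real) \<Rightarrow> real \<times> real \<Rightarrow> nat \<Rightarrow> nat \<Rightarrow> real" where
  "hessian f x i j = pd j (pd i f) x"

definition negative_definite :: "(nat \<Rightarrow> nat \<Rightarrow> real) \<Rightarrow> bool" where
  "negative_definite H \<longleftrightarrow>
     (\<forall>u :: nat \<Rightarrow> real. (\<exists>i<2. u i \<noteq> 0) \<longrightarrow> (\<Sum>i<2. \<Sum>j<2. u i * H i j * u j) < 0)"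

definition grid_vertex :: "real \<Rightarrow> real \<Rightarrow> nat \<Rightarrow> nat \<Rightarrow> nat \<Rightarrow> real \<times> real" where
  "grid_vertex a b n i j = (real i / real n * a, real j / real n * b)"

definition nondegenerate :: "real \<Rightarrow> real \<Rightarrow> (real \<times> real \<Rightarrow> real) \<Rightarrow> nat \<Rightarrow> bool" where
  "nondegenerate a b f n \<longleftrightarrow>
     (\<forall>i j l m. i \<le> n \<and> j \<le> n \<and> l \<le> n \<and> m \<le> n \<and>
        grid_vertex a b n i j \<noteq> grid_vertex a b n l m \<longrightarrow>
        f (grid_vertex a b n i j) \<noteq> f (grid_vertex a b n l m))"

definition grid_circle :: "real \<Rightarrow> real \<Rightarrow> nat \<Rightarrow> nat \<Rightarrow> nat \<Rightarrow> nat \<Rightarrow> (real \<times> real) set" where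
  "grid_circle a b n r i j =
     {grid_vertex a b n l m | l m. l \<le> n \<and> m \<le> n \<and>
        max \<bar>int l - int i\<bar> \<bar>int m - int j\<bar> \<le> int r}"

definition maximal_in_circle ::
  "real \<Rightarrow> real \<Rightarrow> (real \<times> real \<Rightarrow> real) \<Rightarrow> nat \<Rightarrow> nat \<Rightarrow> nat \<Rightarrow> nat \<Rightarrow> bool" where
  "maximal_in_circle a b f n r i j \<longleftrightarrow>
     (\<forall>q\<in>grid_circle a b n r i j. f (grid_vertex a b n i j) \<ge> f q)"

end

theory Submission
  imports Defs "HOL-Analysis.Analysis"
begin


lemma mvt_between:
  fixes g g1 :: "real \<Rightarrow> real"
  assumes "\<And>s. min t y \<le> s \<Longrightarrow> s \<le> max t y \<Longrightarrow> DERIV g s :> g1 s"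
  shows "\<exists>z. min t y \<le> z \<and> z \<le> max t y \<and> g y - g t = g1 z * (y - t)"
proof (cases "t < y")
  case True
  then obtain z where "t < z" "z < y" "g y - g t = (y - t) * g1 z"
    using MVT2[of t y g g1] assms by (auto simp: min_def max_def)
  then show ?thesis using True by (intro exI[of _ z]) (auto simp: min_def max_def)
next
  case False
  show ?thesis
  proof (cases "y < t")
    case True
    then obtain z where "y < z" "z < t" "g t - g y = (t - y) * g1 z"
      using MVT2[of y t g g1] assms by (auto simp: min_def max_def)
    then show ?thesis using True by (intro exI[of _ z]) (auto simp: min_def max_def algebra_simps)
  next
    case False
    with \<open>\<not> t < y\<close> have "t = y" by auto
    then show ?thesis by auto
  qed
qed

lemma taylor1:
  fixes g g1 g2 :: "real \<Rightarrow> real"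
  assumes d1: "\<And>s. min t y \<le> s \<Longrightarrow> s \<le> max t y \<Longrightarrow> DERIV g s :> g1 s"
    and d2: "\<And>s. min t y \<le> s \<Longrightarrow> s \<le> max t y \<Longrightarrow> DERIV g1 s :> g2 s"
    and bd: "\<And>s. min t y \<le> s \<Longrightarrow> s \<le> max t y \<Longrightarrow> \<bar>g2 s\<bar> \<le> M"
  shows "\<bar>g y - g t - g1 t * (y - t)\<bar> \<le> M * (y - t)^2"
proof -
  obtain z where z: "min t y \<le> z" "z \<le> max t y" "g y - g t = g1 z * (y - t)"
    using mvt_between[of t y g g1] d1 by blast
  have "\<And>s. min t z \<le> s \<Longrightarrow> s \<le> max t z \<Longrightarrow> DERIV g1 s :> g2 s"
    using z by (intro d2) (auto simp: min_def max_def split: if_splits)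
  then obtain w where w: "min t w \<le> w" "min t z \<le> w" "w \<le> max t z" "g1 z - g1 t = g2 w * (z - t)"
    using mvt_between[of t z g1 g2] by auto
  have bw: "\<bar>g2 w\<bar> \<le> M" using z w by (intro bd) (auto simp: min_def max_def split: if_splits)
  have "g y - g t - g1 t * (y - t) = (g1 z - g1 t) * (y - t)"
    using z(3) by (simp add: algebra_simps)
  also have "\<dots> = g2 w * (z - t) * (y - t)" using w(4) by simp
  finally have "g y - g t - g1 t * (y - t) = g2 w * (z - t) * (y - t)" .
  also have "\<bar>\<dots>\<bar> = \<bar>g2 w\<bar> * (\<bar>z - t\<bar> * \<bar>y - t\<bar>)" by (simp add: abs_mult)
  also have "\<dots> \<le> M * (\<bar>y - t\<bar> * \<bar>y - t\<bar>)"
  proof (rule mult_mono)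
    show "\<bar>z - t\<bar> * \<bar>y - t\<bar> \<le> \<bar>y - t\<bar> * \<bar>y - t\<bar>"
      using z by (intro mult_right_mono) (auto simp: min_def max_def split: if_splits)
  qed (use bw in auto)
  finally show ?thesis by (simp add: power2_eq_square abs_mult_self)
qed

lemma quad_negdef:
  fixes A s D :: real
  assumes "\<And>x y. (x \<noteq> 0 \<or> y \<noteq> 0) \<Longrightarrow> A*x*x + s*x*y + D*y*y < 0"
  shows "\<exists>l>0. \<forall>x y. A*x*x + s*x*y + D*y*y \<le> - l * (x^2 + y^2)"
proof -
  have A: "A < 0" using assms[of 1 0] by simp
  have D: "D < 0" using assms[of 0 1] by simp
  have "A * (-s/(2*A)) * (-s/(2*A)) + s * (-s/(2*A)) * 1 + D*1*1 < 0" using assms[of "-s/(2*A)" 1] by simp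
  also have "A * (-s/(2*A)) * (-s/(2*A)) + s * (-s/(2*A)) * 1 + D*1*1 = D - s^2/(4*A)"
    using A by (simp add: field_simps power2_eq_square)
  finally have "D - s^2/(4*A) < 0" .
  hence "D < s^2/(4*A)" by simp
  hence "D * (4*A) > s^2" using A by (simp add: pos_less_divide_eq neg_less_divide_eq)
  hence disc: "s^2 < 4*A*D" by (simp add: algebra_simps)
  define l where "l = (4*A*D - s^2) / (4*(-A - D))"
  have den: "4*(-A - D) > 0" using A D by simp
  have lpos: "l > 0" unfolding l_def using disc den by (intro divide_pos_pos) auto
  have "4*A*D - s^2 \<le> (-A) * (4*(-A-D))"
  proof -
    have "(-A) * (4*(-A-D)) = 4*A*D + 4*A^2" by (simp add: algebra_simps power2_eq_square)
    moreover have "0 \<le> s^2" "0 \<le> A^2" by auto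
    ultimately show ?thesis by linarith
  qed
  hence la: "l \<le> -A" unfolding l_def using den by (simp add: pos_divide_le_eq)
  have "4*A*D - s^2 \<le> (-D) * (4*(-A-D))"
  proof -
    have "(-D) * (4*(-A-D)) = 4*A*D + 4*D^2" by (simp add: algebra_simps power2_eq_square)
    moreover have "0 \<le> s^2" "0 \<le> D^2" by auto
    ultimately show ?thesis by linarith
  qed
  hence ld: "l \<le> -D" unfolding l_def using den by (simp add: pos_divide_le_eq)
  have lAD: "l * (4*(-A-D)) = 4*A*D - s^2" unfolding l_def using den by simp
  have key: "(-A - l) * (-D - l) - s^2/4 = l^2"
  proof -
    have "(-A - l) * (-D - l) - s^2/4 = A*D - (l * (4*(-A-D)))/4 + l^2 - s^2/4"
      by (simp add: field_simps power2_eq_square)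
    also have "\<dots> = l^2" using lAD by (simp add: field_simps)
    finally show ?thesis .
  qed
  show ?thesis
  proof (intro exI[of _ l] conjI allI lpos)
    fix x y :: real
    define a' where "a' = -A - l"
    define d' where "d' = -D - l"
    have a': "a' \<ge> 0" and d': "d' \<ge> 0" using la ld by (auto simp: a'_def d'_def)
    have ad: "s^2 \<le> 4*a'*d'"
    proof -
      have "a' * d' - s^2/4 = l^2" using key unfolding a'_def d'_def .
      moreover have "0 \<le> l^2" by simp
      ultimately show ?thesis by linarith
    qed
    have "a'*x*x - s*x*y + d'*y*y \<ge> 0"
    proof (cases "a' = 0")
      case True
      then have "s^2 \<le> 0" using ad by simp
      then have "s = 0" by simp
      then show ?thesis using True d' by (simp add: mult.assoc)
    next
      case False
      hence ap: "a' > 0" using a' by simp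
      have "a' * (a'*x*x - s*x*y + d'*y*y) = (a'*x - s*y/2)^2 + (a'*d' - s^2/4)*y^2"
        by (simp add: field_simps power2_eq_square)
      also have "\<dots> \<ge> 0" using ad by (intro add_nonneg_nonneg) auto
      finally show ?thesis using ap by (simp add: zero_le_mult_iff)
    qed
    then show "A*x*x + s*x*y + D*y*y \<le> - l * (x^2 + y^2)"
      unfolding a'_def d'_def by (simp add: algebra_simps power2_eq_square)
  qed
qed




lemma mono_lemma:
  fixes F1 F2 F11 F12 F21 F22 :: "real \<times> real \<Rightarrow> real"
  assumes D11: "\<And>x1 x2. \<bar>x1-p1\<bar> \<le> \<delta> \<Longrightarrow> \<bar>x2-p2\<bar> \<le> \<delta> \<Longrightarrow> DERIV (\<lambda>t. F1 (t,x2)) x1 :> F11 (x1,x2)"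
    and D12: "\<And>x1 x2. \<bar>x1-p1\<bar> \<le> \<delta> \<Longrightarrow> \<bar>x2-p2\<bar> \<le> \<delta> \<Longrightarrow> DERIV (\<lambda>t. F1 (x1,t)) x2 :> F12 (x1,x2)"
    and D21: "\<And>x1 x2. \<bar>x1-p1\<bar> \<le> \<delta> \<Longrightarrow> \<bar>x2-p2\<bar> \<le> \<delta> \<Longrightarrow> DERIV (\<lambda>t. F2 (t,x2)) x1 :> F21 (x1,x2)"
    and D22: "\<And>x1 x2. \<bar>x1-p1\<bar> \<le> \<delta> \<Longrightarrow> \<bar>x2-p2\<bar> \<le> \<delta> \<Longrightarrow> DERIV (\<lambda>t. F2 (x1,t)) x2 :> F22 (x1,x2)"
    and E11: "\<And>x1 x2. \<bar>x1-p1\<bar> \<le> \<delta> \<Longrightarrow> \<bar>x2-p2\<bar> \<le> \<delta> \<Longrightarrow> \<bar>F11 (x1,x2) - h11\<bar> \<le> \<epsilon>"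
    and E12: "\<And>x1 x2. \<bar>x1-p1\<bar> \<le> \<delta> \<Longrightarrow> \<bar>x2-p2\<bar> \<le> \<delta> \<Longrightarrow> \<bar>F12 (x1,x2) - h12\<bar> \<le> \<epsilon>"
    and E21: "\<And>x1 x2. \<bar>x1-p1\<bar> \<le> \<delta> \<Longrightarrow> \<bar>x2-p2\<bar> \<le> \<delta> \<Longrightarrow> \<bar>F21 (x1,x2) - h21\<bar> \<le> \<epsilon>"
    and E22: "\<And>x1 x2. \<bar>x1-p1\<bar> \<le> \<delta> \<Longrightarrow> \<bar>x2-p2\<bar> \<le> \<delta> \<Longrightarrow> \<bar>F22 (x1,x2) - h22\<bar> \<le> \<epsilon>"
    and Q: "\<And>d1 d2. h11*d1*d1 + (h12+h21)*d1*d2 + h22*d2*d2 \<le> - l0 * (d1^2 + d2^2)"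
    and z1: "F1 (p1,p2) = 0" and z2: "F2 (p1,p2) = 0"
    and x: "\<bar>x1-p1\<bar> \<le> \<delta>" "\<bar>x2-p2\<bar> \<le> \<delta>"
  shows "F1 (x1,x2) * (x1-p1) + F2 (x1,x2) * (x2-p2) \<le> (2*\<epsilon> - l0) * ((x1-p1)^2 + (x2-p2)^2)"
proof -
  define d1 where "d1 = x1 - p1"
  define d2 where "d2 = x2 - p2"
  have inb1: "\<And>s. min p1 x1 \<le> s \<Longrightarrow> s \<le> max p1 x1 \<Longrightarrow> \<bar>s - p1\<bar> \<le> \<delta>" using x by (auto simp: min_def max_def split: if_splits)
  have inb2: "\<And>s. min p2 x2 \<le> s \<Longrightarrow> s \<le> max p2 x2 \<Longrightarrow> \<bar>s - p2\<bar> \<le> \<delta>" using x by (auto simp: min_def max_def split: if_splits)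
  have dpos: "\<delta> \<ge> 0" using x by simp
  obtain a1 where a1: "min p1 x1 \<le> a1" "a1 \<le> max p1 x1" "F1 (x1,x2) - F1 (p1,x2) = F11 (a1,x2) * (x1 - p1)"
    using mvt_between[of p1 x1 "\<lambda>t. F1 (t,x2)" "\<lambda>t. F11 (t,x2)"] D11 inb1 x by blast
  obtain a2 where a2: "min p2 x2 \<le> a2" "a2 \<le> max p2 x2" "F1 (p1,x2) - F1 (p1,p2) = F12 (p1,a2) * (x2 - p2)"
    using mvt_between[of p2 x2 "\<lambda>t. F1 (p1,t)" "\<lambda>t. F12 (p1,t)"] D12 inb2 dpos by force
  obtain a3 where a3: "min p1 x1 \<le> a3" "a3 \<le> max p1 x1" "F2 (x1,x2) - F2 (p1,x2) = F21 (a3,x2) * (x1 - p1)"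
    using mvt_between[of p1 x1 "\<lambda>t. F2 (t,x2)" "\<lambda>t. F21 (t,x2)"] D21 inb1 x by blast
  obtain a4 where a4: "min p2 x2 \<le> a4" "a4 \<le> max p2 x2" "F2 (p1,x2) - F2 (p1,p2) = F22 (p1,a4) * (x2 - p2)"
    using mvt_between[of p2 x2 "\<lambda>t. F2 (p1,t)" "\<lambda>t. F22 (p1,t)"] D22 inb2 dpos by force
  define e11 where "e11 = F11 (a1,x2) - h11"
  define e12 where "e12 = F12 (p1,a2) - h12"
  define e21 where "e21 = F21 (a3,x2) - h21"
  define e22 where "e22 = F22 (p1,a4) - h22"
  have be11: "\<bar>e11\<bar> \<le> \<epsilon>" unfolding e11_def using E11 inb1 a1 x by blast
  have be12: "\<bar>e12\<bar> \<le> \<epsilon>" unfolding e12_def using E12 inb2 a2 dpos by force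
  have be21: "\<bar>e21\<bar> \<le> \<epsilon>" unfolding e21_def using E21 inb1 a3 x by blast
  have be22: "\<bar>e22\<bar> \<le> \<epsilon>" unfolding e22_def using E22 inb2 a4 dpos by force
  have F1x: "F1 (x1,x2) = (h11 + e11) * d1 + (h12 + e12) * d2"
    using a1(3) a2(3) z1 unfolding e11_def e12_def d1_def d2_def by simp
  have F2x: "F2 (x1,x2) = (h21 + e21) * d1 + (h22 + e22) * d2"
    using a3(3) a4(3) z2 unfolding e21_def e22_def d1_def d2_def by simp
  have "F1 (x1,x2) * d1 + F2 (x1,x2) * d2 =
      (h11*d1*d1 + (h12+h21)*d1*d2 + h22*d2*d2) + (e11*(d1*d1) + e12*(d1*d2) + e21*(d1*d2) + e22*(d2*d2))"
    unfolding F1x F2x by (simp add: algebra_simps)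
  moreover have "e11*(d1*d1) \<le> \<epsilon>*(d1*d1)" using be11 by (intro mult_right_mono) auto
  moreover have "e22*(d2*d2) \<le> \<epsilon>*(d2*d2)" using be22 by (intro mult_right_mono) auto
  moreover have "e12*(d1*d2) \<le> \<epsilon>*\<bar>d1*d2\<bar>"
  proof -
    have "e12*(d1*d2) \<le> \<bar>e12\<bar>*\<bar>d1*d2\<bar>" by (metis abs_ge_self abs_mult)
    also have "\<dots> \<le> \<epsilon>*\<bar>d1*d2\<bar>" using be12 by (intro mult_right_mono) auto
    finally show ?thesis .
  qed
  moreover have "e21*(d1*d2) \<le> \<epsilon>*\<bar>d1*d2\<bar>"
  proof -
    have "e21*(d1*d2) \<le> \<bar>e21\<bar>*\<bar>d1*d2\<bar>" by (metis abs_ge_self abs_mult)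
    also have "\<dots> \<le> \<epsilon>*\<bar>d1*d2\<bar>" using be21 by (intro mult_right_mono) auto
    finally show ?thesis .
  qed
  moreover have "2*\<bar>d1*d2\<bar> \<le> d1*d1 + d2*d2"
  proof -
    have "0 \<le> (\<bar>d1\<bar> - \<bar>d2\<bar>)^2" by simp
    thus ?thesis by (simp add: power2_eq_square algebra_simps abs_mult)
  qed
  moreover have "\<epsilon> \<ge> 0" using be11 by simp
  moreover note Q[of d1 d2]
  ultimately have "F1 (x1,x2) * d1 + F2 (x1,x2) * d2 \<le> (2*\<epsilon> - l0) * (d1^2 + d2^2)"
  proof -
    assume h: "F1 (x1,x2) * d1 + F2 (x1,x2) * d2 =
      (h11*d1*d1 + (h12+h21)*d1*d2 + h22*d2*d2) + (e11*(d1*d1) + e12*(d1*d2) + e21*(d1*d2) + e22*(d2*d2))"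
      "e11*(d1*d1) \<le> \<epsilon>*(d1*d1)" "e22*(d2*d2) \<le> \<epsilon>*(d2*d2)" "e12*(d1*d2) \<le> \<epsilon>*\<bar>d1*d2\<bar>"
      "e21*(d1*d2) \<le> \<epsilon>*\<bar>d1*d2\<bar>" "2*\<bar>d1*d2\<bar> \<le> d1*d1 + d2*d2" "\<epsilon> \<ge> 0"
      "h11*d1*d1 + (h12+h21)*d1*d2 + h22*d2*d2 \<le> - l0 * (d1^2 + d2^2)"
    have "\<epsilon> * (2*\<bar>d1*d2\<bar>) \<le> \<epsilon> * (d1*d1 + d2*d2)" using h(6,7) by (intro mult_left_mono) auto
    then show ?thesis using h by (simp add: algebra_simps power2_eq_square)
  qed
  then show ?thesis unfolding d1_def d2_def .
qed




locale gs =
  fixes a b :: real and f F1 F2 F11 F22 :: "real \<times> real \<Rightarrow> real" and p1 p2 \<delta> M lam :: real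
  assumes apos: "a > 0" and bpos: "b > 0" and dpos: "\<delta> > 0" and Mpos: "M > 0" and lpos: "lam > 0"
    and bx: "\<delta> < p1" "p1 + \<delta> < a" "\<delta> < p2" "p2 + \<delta> < b"
    and D1: "\<And>x1 x2. \<bar>x1-p1\<bar> \<le> \<delta> \<Longrightarrow> \<bar>x2-p2\<bar> \<le> \<delta> \<Longrightarrow> DERIV (\<lambda>t. f (t,x2)) x1 :> F1 (x1,x2)"
    and D11: "\<And>x1 x2. \<bar>x1-p1\<bar> \<le> \<delta> \<Longrightarrow> \<bar>x2-p2\<bar> \<le> \<delta> \<Longrightarrow> DERIV (\<lambda>t. F1 (t,x2)) x1 :> F11 (x1,x2)"
    and D2: "\<And>x1 x2. \<bar>x1-p1\<bar> \<le> \<delta> \<Longrightarrow> \<bar>x2-p2\<bar> \<le> \<delta> \<Longrightarrow> DERIV (\<lambda>t. f (x1,t)) x2 :> F2 (x1,x2)"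
    and D22: "\<And>x1 x2. \<bar>x1-p1\<bar> \<le> \<delta> \<Longrightarrow> \<bar>x2-p2\<bar> \<le> \<delta> \<Longrightarrow> DERIV (\<lambda>t. F2 (x1,t)) x2 :> F22 (x1,x2)"
    and B11: "\<And>x1 x2. \<bar>x1-p1\<bar> \<le> \<delta> \<Longrightarrow> \<bar>x2-p2\<bar> \<le> \<delta> \<Longrightarrow> \<bar>F11 (x1,x2)\<bar> \<le> M"
    and B22: "\<And>x1 x2. \<bar>x1-p1\<bar> \<le> \<delta> \<Longrightarrow> \<bar>x2-p2\<bar> \<le> \<delta> \<Longrightarrow> \<bar>F22 (x1,x2)\<bar> \<le> M"
    and mono: "\<And>x1 x2. \<bar>x1-p1\<bar> \<le> \<delta> \<Longrightarrow> \<bar>x2-p2\<bar> \<le> \<delta> \<Longrightarrow>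
        F1 (x1,x2)*(x1-p1) + F2 (x1,x2)*(x2-p2) \<le> -lam*((x1-p1)^2+(x2-p2)^2)"
begin

lemma tay1:
  assumes "\<bar>x1-p1\<bar> \<le> \<delta>" "\<bar>y-p1\<bar> \<le> \<delta>" "\<bar>x2-p2\<bar> \<le> \<delta>"
  shows "\<bar>f (y,x2) - f (x1,x2) - F1 (x1,x2) * (y - x1)\<bar> \<le> M * (y - x1)^2"
proof -
  have b: "\<And>s. min x1 y \<le> s \<Longrightarrow> s \<le> max x1 y \<Longrightarrow> \<bar>s - p1\<bar> \<le> \<delta>"
    using assms by (auto simp: min_def max_def split: if_splits)
  have h1: "\<And>s. min x1 y \<le> s \<Longrightarrow> s \<le> max x1 y \<Longrightarrow> DERIV (\<lambda>t. f (t,x2)) s :> F1 (s,x2)"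
    using b assms(3) D1 by blast
  have h2: "\<And>s. min x1 y \<le> s \<Longrightarrow> s \<le> max x1 y \<Longrightarrow> DERIV (\<lambda>t. F1 (t,x2)) s :> F11 (s,x2)"
    using b assms(3) D11 by blast
  have h3: "\<And>s. min x1 y \<le> s \<Longrightarrow> s \<le> max x1 y \<Longrightarrow> \<bar>F11 (s,x2)\<bar> \<le> M"
    using b assms(3) B11 by blast
  from taylor1[OF h1 h2 h3] show ?thesis .
qed

lemma tay2:
  assumes "\<bar>x2-p2\<bar> \<le> \<delta>" "\<bar>y-p2\<bar> \<le> \<delta>" "\<bar>x1-p1\<bar> \<le> \<delta>"
  shows "\<bar>f (x1,y) - f (x1,x2) - F2 (x1,x2) * (y - x2)\<bar> \<le> M * (y - x2)^2"
proof -
  have b: "\<And>s. min x2 y \<le> s \<Longrightarrow> s \<le> max x2 y \<Longrightarrow> \<bar>s - p2\<bar> \<le> \<delta>"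
    using assms by (auto simp: min_def max_def split: if_splits)
  have h1: "\<And>s. min x2 y \<le> s \<Longrightarrow> s \<le> max x2 y \<Longrightarrow> DERIV (\<lambda>t. f (x1,t)) s :> F2 (x1,s)"
    using b assms(3) D2 by blast
  have h2: "\<And>s. min x2 y \<le> s \<Longrightarrow> s \<le> max x2 y \<Longrightarrow> DERIV (\<lambda>t. F2 (x1,t)) s :> F22 (x1,s)"
    using b assms(3) D22 by blast
  have h3: "\<And>s. min x2 y \<le> s \<Longrightarrow> s \<le> max x2 y \<Longrightarrow> \<bar>F22 (x1,s)\<bar> \<le> M"
    using b assms(3) B22 by blast
  from taylor1[OF h1 h2 h3] show ?thesis .
qed

lemma grad1:
  assumes "\<bar>x1-p1\<bar> \<le> \<delta>/2" "\<bar>x2-p2\<bar> \<le> \<delta>" "0 < h" "h \<le> \<delta>/2"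
    and "f (x1+h,x2) \<le> f (x1,x2)" "f (x1-h,x2) \<le> f (x1,x2)"
  shows "\<bar>F1 (x1,x2)\<bar> \<le> M * h"
proof -
  have a: "\<bar>x1 + h - p1\<bar> \<le> \<delta>" "\<bar>x1 - h - p1\<bar> \<le> \<delta>" "\<bar>x1-p1\<bar> \<le> \<delta>" using assms by linarith+
  have t1: "\<bar>f (x1+h,x2) - f (x1,x2) - F1 (x1,x2) * h\<bar> \<le> M * h^2"
    using tay1[OF a(3) a(1) assms(2)] by simp
  have t2: "\<bar>f (x1-h,x2) - f (x1,x2) + F1 (x1,x2) * h\<bar> \<le> M * h^2"
    using tay1[OF a(3) a(2) assms(2)] by simp
  have "F1 (x1,x2) * h \<le> (M*h) * h" using t1 assms(5) by (simp add: power2_eq_square abs_le_iff)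
  hence u: "F1 (x1,x2) \<le> M*h" using assms(3) by simp
  have "(- F1 (x1,x2)) * h \<le> (M*h) * h" using t2 assms(6) by (simp add: power2_eq_square abs_le_iff)
  hence "- F1 (x1,x2) \<le> M*h" using assms(3) by (rule mult_right_le_imp_le)
  with u show ?thesis by simp
qed

lemma grad2:
  assumes "\<bar>x2-p2\<bar> \<le> \<delta>/2" "\<bar>x1-p1\<bar> \<le> \<delta>" "0 < h" "h \<le> \<delta>/2"
    and "f (x1,x2+h) \<le> f (x1,x2)" "f (x1,x2-h) \<le> f (x1,x2)"
  shows "\<bar>F2 (x1,x2)\<bar> \<le> M * h"
proof -
  have a: "\<bar>x2 + h - p2\<bar> \<le> \<delta>" "\<bar>x2 - h - p2\<bar> \<le> \<delta>" "\<bar>x2-p2\<bar> \<le> \<delta>" using assms by linarith+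
  have t1: "\<bar>f (x1,x2+h) - f (x1,x2) - F2 (x1,x2) * h\<bar> \<le> M * h^2"
    using tay2[OF a(3) a(1) assms(2)] by simp
  have t2: "\<bar>f (x1,x2-h) - f (x1,x2) + F2 (x1,x2) * h\<bar> \<le> M * h^2"
    using tay2[OF a(3) a(2) assms(2)] by simp
  have "F2 (x1,x2) * h \<le> (M*h) * h" using t1 assms(5) by (simp add: power2_eq_square abs_le_iff)
  hence u: "F2 (x1,x2) \<le> M*h" using assms(3) by simp
  have "(- F2 (x1,x2)) * h \<le> (M*h) * h" using t2 assms(6) by (simp add: power2_eq_square abs_le_iff)
  hence "- F2 (x1,x2) \<le> M*h" using assms(3) by (rule mult_right_le_imp_le)
  with u show ?thesis by simp
qed

lemma localize:
  assumes "\<bar>x1-p1\<bar> \<le> \<delta>" "\<bar>x2-p2\<bar> \<le> \<delta>" "\<bar>F1 (x1,x2)\<bar> \<le> M*h" "\<bar>F2 (x1,x2)\<bar> \<le> M*h"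
  shows "\<bar>x1-p1\<bar> + \<bar>x2-p2\<bar> \<le> 2*M*h/lam"
proof -
  define d1 where "d1 = x1 - p1"
  define d2 where "d2 = x2 - p2"
  define S where "S = \<bar>d1\<bar> + \<bar>d2\<bar>"
  have m: "lam*(d1^2+d2^2) \<le> -(F1 (x1,x2)*d1 + F2 (x1,x2)*d2)"
    using mono[OF assms(1,2)] unfolding d1_def d2_def by simp
  have "-(F1 (x1,x2)*d1) \<le> \<bar>F1 (x1,x2)\<bar>*\<bar>d1\<bar>" by (metis abs_ge_minus_self abs_mult)
  also have "\<dots> \<le> (M*h)*\<bar>d1\<bar>" using assms(3) by (intro mult_right_mono) auto
  finally have e1: "-(F1 (x1,x2)*d1) \<le> (M*h)*\<bar>d1\<bar>" .
  have "-(F2 (x1,x2)*d2) \<le> \<bar>F2 (x1,x2)\<bar>*\<bar>d2\<bar>" by (metis abs_ge_minus_self abs_mult)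
  also have "\<dots> \<le> (M*h)*\<bar>d2\<bar>" using assms(4) by (intro mult_right_mono) auto
  finally have e2: "-(F2 (x1,x2)*d2) \<le> (M*h)*\<bar>d2\<bar>" .
  have sq: "S^2 \<le> 2*(d1^2+d2^2)"
  proof -
    have "0 \<le> (\<bar>d1\<bar> - \<bar>d2\<bar>)^2" by simp
    thus ?thesis unfolding S_def by (simp add: power2_eq_square algebra_simps)
  qed
  have "lam * S^2 \<le> lam * (2*(d1^2+d2^2))" using sq lpos by (intro mult_left_mono) auto
  also have "\<dots> \<le> 2*(M*h)*S" using m e1 e2 unfolding S_def by (simp add: algebra_simps)
  finally have k: "lam * S * S \<le> (2*M*h) * S" by (simp add: power2_eq_square algebra_simps)
  show ?thesis
  proof (cases "S = 0")
    case True
    have "0 \<le> M*h" using assms(3) by linarith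
    hence "0 \<le> 2*M*h/lam" using lpos by simp
    then show ?thesis using True unfolding S_def d1_def d2_def by simp
  next
    case False
    hence "S > 0" unfolding S_def by simp
    hence "lam * S \<le> 2*M*h" using k by simp
    hence "S \<le> 2*M*h/lam" using lpos by (simp add: field_simps)
    then show ?thesis unfolding S_def d1_def d2_def .
  qed
qed

lemma improve1:
  assumes "\<bar>x1-p1\<bar> \<le> \<delta>" "\<bar>x2-p2\<bar> \<le> \<delta>" "F1 (x1,x2)*(x1-p1) \<le> -lam*\<delta>^2/8"
    "0 < h" "h \<le> \<delta>" "M*h < lam*\<delta>/8" "\<bar>y - p1\<bar> \<le> \<delta>" "y = x1 - h \<and> x1 > p1 \<or> y = x1 + h \<and> x1 < p1"
  shows "f (y,x2) > f (x1,x2)"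
proof -
  have t: "\<bar>f (y,x2) - f (x1,x2) - F1 (x1,x2) * (y - x1)\<bar> \<le> M * (y - x1)^2"
    using tay1[OF assms(1,7,2)] .
  have hh: "(y-x1)^2 = h*h" using assms(8) by (auto simp: power2_eq_square)
  have pos: "lam*\<delta>^2/8 > 0" using lpos dpos by simp
  have g: "F1 (x1,x2) * (y - x1) \<ge> (lam*\<delta>/8) * h"
    using assms(8)
  proof
    assume c: "y = x1 - h \<and> x1 > p1"
    let ?F = "- F1 (x1,x2)"
    have "?F * (x1 - p1) \<ge> lam*\<delta>^2/8" using assms(3) by simp
    moreover have "?F * (x1-p1) \<le> ?F * \<delta>"
    proof -
      have "F1 (x1,x2) * (x1-p1) < 0" using assms(3) pos by linarith
      hence "?F > 0" using c by (simp add: mult_less_0_iff)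
      thus ?thesis using assms(1) by (intro mult_left_mono) auto
    qed
    ultimately have "?F * \<delta> \<ge> (lam*\<delta>/8) * \<delta>" by (simp add: power2_eq_square)
    hence "?F \<ge> lam*\<delta>/8" by (rule mult_right_le_imp_le[OF _ dpos])
    hence "?F * h \<ge> (lam*\<delta>/8) * h" using assms(4) by (intro mult_right_mono) auto
    thus ?thesis using c by simp
  next
    assume c: "y = x1 + h \<and> x1 < p1"
    let ?F = "F1 (x1,x2)"
    have "?F * (p1 - x1) \<ge> lam*\<delta>^2/8" using assms(3) by (simp add: algebra_simps)
    moreover have "?F * (p1-x1) \<le> ?F * \<delta>"
    proof -
      have "F1 (x1,x2) * (x1-p1) < 0" using assms(3) pos by linarith
      hence "?F > 0" using c by (simp add: mult_less_0_iff)
      thus ?thesis using assms(1) by (intro mult_left_mono) auto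
    qed
    ultimately have "?F * \<delta> \<ge> (lam*\<delta>/8) * \<delta>" by (simp add: power2_eq_square)
    hence "?F \<ge> lam*\<delta>/8" by (rule mult_right_le_imp_le[OF _ dpos])
    hence "?F * h \<ge> (lam*\<delta>/8) * h" using assms(4) by (intro mult_right_mono) auto
    thus ?thesis using c by simp
  qed
  have "M*h*h < (lam*\<delta>/8) * h" using assms(4,6) by simp
  then show ?thesis using t g hh by (simp add: abs_le_iff)
qed

lemma improve2:
  assumes "\<bar>x1-p1\<bar> \<le> \<delta>" "\<bar>x2-p2\<bar> \<le> \<delta>" "F2 (x1,x2)*(x2-p2) \<le> -lam*\<delta>^2/8"
    "0 < h" "h \<le> \<delta>" "M*h < lam*\<delta>/8" "\<bar>y - p2\<bar> \<le> \<delta>" "y = x2 - h \<and> x2 > p2 \<or> y = x2 + h \<and> x2 < p2"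
  shows "f (x1,y) > f (x1,x2)"
proof -
  have t: "\<bar>f (x1,y) - f (x1,x2) - F2 (x1,x2) * (y - x2)\<bar> \<le> M * (y - x2)^2"
    using tay2[OF assms(2,7,1)] .
  have hh: "(y-x2)^2 = h*h" using assms(8) by (auto simp: power2_eq_square)
  have pos: "lam*\<delta>^2/8 > 0" using lpos dpos by simp
  have g: "F2 (x1,x2) * (y - x2) \<ge> (lam*\<delta>/8) * h"
    using assms(8)
  proof
    assume c: "y = x2 - h \<and> x2 > p2"
    let ?F = "- F2 (x1,x2)"
    have "?F * (x2 - p2) \<ge> lam*\<delta>^2/8" using assms(3) by simp
    moreover have "?F * (x2-p2) \<le> ?F * \<delta>"
    proof -
      have "F2 (x1,x2) * (x2-p2) < 0" using assms(3) pos by linarith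
      hence "?F > 0" using c by (simp add: mult_less_0_iff)
      thus ?thesis using assms(2) by (intro mult_left_mono) auto
    qed
    ultimately have "?F * \<delta> \<ge> (lam*\<delta>/8) * \<delta>" by (simp add: power2_eq_square)
    hence "?F \<ge> lam*\<delta>/8" by (rule mult_right_le_imp_le[OF _ dpos])
    hence "?F * h \<ge> (lam*\<delta>/8) * h" using assms(4) by (intro mult_right_mono) auto
    thus ?thesis using c by simp
  next
    assume c: "y = x2 + h \<and> x2 < p2"
    let ?F = "F2 (x1,x2)"
    have "?F * (p2 - x2) \<ge> lam*\<delta>^2/8" using assms(3) by (simp add: algebra_simps)
    moreover have "?F * (p2-x2) \<le> ?F * \<delta>"
    proof -
      have "F2 (x1,x2) * (x2-p2) < 0" using assms(3) pos by linarith
      hence "?F > 0" using c by (simp add: mult_less_0_iff)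
      thus ?thesis using assms(2) by (intro mult_left_mono) auto
    qed
    ultimately have "?F * \<delta> \<ge> (lam*\<delta>/8) * \<delta>" by (simp add: power2_eq_square)
    hence "?F \<ge> lam*\<delta>/8" by (rule mult_right_le_imp_le[OF _ dpos])
    hence "?F * h \<ge> (lam*\<delta>/8) * h" using assms(4) by (intro mult_right_mono) auto
    thus ?thesis using c by simp
  qed
  have "M*h*h < (lam*\<delta>/8) * h" using assms(4,6) by simp
  then show ?thesis using t g hh by (simp add: abs_le_iff)
qed

end



lemma near_index:
  assumes "0 < h" "0 \<le> p" "p \<le> real n * h"
  shows "\<exists>i\<le>n. \<bar>real i * h - p\<bar> \<le> h"
proof -
  define i where "i = nat \<lfloor>p/h\<rfloor>"
  have fl: "0 \<le> \<lfloor>p/h\<rfloor>" using assms by simp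
  have ri: "real i = of_int \<lfloor>p/h\<rfloor>" unfolding i_def using fl by simp
  have a: "real i \<le> p/h" "p/h < real i + 1" unfolding ri by linarith+
  have "p/h \<le> real n" using assms by (simp add: divide_le_eq)
  hence "i \<le> n" using a by linarith
  moreover have "real i * h \<le> p" using a(1) assms(1) by (simp add: le_divide_eq)
  moreover have "p < (real i + 1) * h" using a(2) assms(1) by (simp add: divide_less_eq)
  ultimately show ?thesis by (intro exI[of _ i]) (auto simp: algebra_simps)
qed

lemma gv_eq: "grid_vertex a b n i j = (real i * (a / real n), real j * (b / real n))"
  by (simp add: grid_vertex_def)

context gs
begin

lemma grid_n:
  fixes n r :: nat and h1 h2 hc :: real
  assumes n: "n > 0" and h1: "h1 = a / real n" and h2: "h2 = b / real n" and hc: "hc = max h1 h2"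
    and r: "r \<ge> 1"
    and C1: "hc \<le> \<delta>/2" and C2: "real r * hc \<le> \<delta>/2" and C3: "M * hc < lam*\<delta>/8"
    and C4: "4*M*hc/lam \<le> real r * h1" "4*M*hc/lam \<le> real r * h2"
    and U: "U = {p1-\<delta>/2<..<p1+\<delta>/2} \<times> {p2-\<delta>/2<..<p2+\<delta>/2}"
    and nd: "nondegenerate a b f n"
  shows "\<exists>!ij. fst ij \<le> n \<and> snd ij \<le> n \<and> grid_vertex a b n (fst ij) (snd ij) \<in> U \<and>
                  maximal_in_circle a b f n r (fst ij) (snd ij)"
proof -
  have h1p: "h1 > 0" using h1 n apos by simp
  have h2p: "h2 > 0" using h2 n bpos by simp
  have h1c: "h1 \<le> hc" and h2c: "h2 \<le> hc" using hc by auto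
  have na: "real n * h1 = a" using h1 n by simp
  have nb: "real n * h2 = b" using h2 n by simp
  have gv: "\<And>i j. grid_vertex a b n i j = (real i * h1, real j * h2)" using gv_eq h1 h2 by simp
  have inC: "\<And>i j l m. l \<le> n \<Longrightarrow> m \<le> n \<Longrightarrow> \<bar>real l - real i\<bar> \<le> real r \<Longrightarrow> \<bar>real m - real j\<bar> \<le> real r
      \<Longrightarrow> grid_vertex a b n l m \<in> grid_circle a b n r i j"
  proof -
    fix i j l m :: nat
    assume a: "l \<le> n" "m \<le> n" "\<bar>real l - real i\<bar> \<le> real r" "\<bar>real m - real j\<bar> \<le> real r"
    have "real_of_int \<bar>int l - int i\<bar> \<le> real_of_int (int r)" using a(3) by simp
    hence x: "\<bar>int l - int i\<bar> \<le> int r" by (simp only: of_int_le_iff)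
    have "real_of_int \<bar>int m - int j\<bar> \<le> real_of_int (int r)" using a(4) by simp
    hence y: "\<bar>int m - int j\<bar> \<le> int r" by (simp only: of_int_le_iff)
    show "grid_vertex a b n l m \<in> grid_circle a b n r i j"
      unfolding grid_circle_def using a(1,2) x y by auto
  qed
  have circ: "\<And>i j q. q \<in> grid_circle a b n r i j \<Longrightarrow> \<exists>l m. q = grid_vertex a b n l m \<and> l \<le> n \<and> m \<le> n \<and>
       \<bar>real l - real i\<bar> \<le> real r \<and> \<bar>real m - real j\<bar> \<le> real r"
  proof -
    fix i j q assume "q \<in> grid_circle a b n r i j"
    then obtain l m where lm: "q = grid_vertex a b n l m" "l \<le> n" "m \<le> n"
      "max \<bar>int l - int i\<bar> \<bar>int m - int j\<bar> \<le> int r" unfolding grid_circle_def by blast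
    have "\<bar>int l - int i\<bar> \<le> int r" "\<bar>int m - int j\<bar> \<le> int r" using lm(4) by auto
    hence "real_of_int \<bar>int l - int i\<bar> \<le> real_of_int (int r)" "real_of_int \<bar>int m - int j\<bar> \<le> real_of_int (int r)"
      by (simp_all only: of_int_le_iff)
    hence "\<bar>real l - real i\<bar> \<le> real r" "\<bar>real m - real j\<bar> \<le> real r" by simp_all
    thus "\<exists>l m. q = grid_vertex a b n l m \<and> l \<le> n \<and> m \<le> n \<and>
       \<bar>real l - real i\<bar> \<le> real r \<and> \<bar>real m - real j\<bar> \<le> real r" using lm by blast
  qed
  have near: "\<bar>real i * h1 - p1\<bar> + \<bar>real j * h2 - p2\<bar> \<le> 2*M*hc/lam"
    if ij: "i \<le> n" "j \<le> n" "grid_vertex a b n i j \<in> U" "maximal_in_circle a b f n r i j" for i j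
  proof -
    define x1 where "x1 = real i * h1"
    define x2 where "x2 = real j * h2"
    have xx: "p1-\<delta>/2 < x1" "x1 < p1+\<delta>/2" "p2 - \<delta>/2 < x2" "x2 < p2+\<delta>/2"
      using ij(3) unfolding U gv x1_def x2_def by auto
    have xu: "\<bar>x1 - p1\<bar> < \<delta>/2" "\<bar>x2 - p2\<bar> < \<delta>/2" unfolding abs_less_iff using xx by auto
    have i1: "i \<ge> 1"
    proof (rule ccontr)
      assume "\<not> i \<ge> 1" hence "i = 0" by simp
      thus False using xu bx dpos unfolding x1_def by simp
    qed
    have i2: "i + 1 \<le> n"
    proof (rule ccontr)
      assume "\<not> i + 1 \<le> n" hence "real n \<le> real i" by simp
      hence "real n * h1 \<le> real i * h1" using h1p by (intro mult_right_mono) auto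
      hence "a \<le> x1" unfolding x1_def using na by simp
      thus False using xu bx by linarith
    qed
    have j1: "j \<ge> 1"
    proof (rule ccontr)
      assume "\<not> j \<ge> 1" hence "j = 0" by simp
      thus False using xu bx dpos unfolding x2_def by simp
    qed
    have j2: "j + 1 \<le> n"
    proof (rule ccontr)
      assume "\<not> j + 1 \<le> n" hence "real n \<le> real j" by simp
      hence "real n * h2 \<le> real j * h2" using h2p by (intro mult_right_mono) auto
      hence "b \<le> x2" unfolding x2_def using nb by simp
      thus False using xu bx by linarith
    qed
    have mx: "\<And>q. q \<in> grid_circle a b n r i j \<Longrightarrow> f q \<le> f (x1,x2)"
      using ij(4) unfolding maximal_in_circle_def gv x1_def x2_def by blast
    have e1: "f (x1+h1,x2) \<le> f (x1,x2)"
    proof -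
      have "grid_vertex a b n (i+1) j \<in> grid_circle a b n r i j" using i2 ij(2) r by (intro inC) auto
      moreover have "grid_vertex a b n (i+1) j = (x1+h1,x2)" unfolding gv x1_def x2_def by (simp add: algebra_simps)
      ultimately show ?thesis using mx by metis
    qed
    have e2: "f (x1-h1,x2) \<le> f (x1,x2)"
    proof -
      have "grid_vertex a b n (i-1) j \<in> grid_circle a b n r i j" using i1 ij(1,2) r by (intro inC) auto
      moreover have "grid_vertex a b n (i-1) j = (x1-h1,x2)" unfolding gv x1_def x2_def using i1
        by (simp add: of_nat_diff algebra_simps)
      ultimately show ?thesis using mx by metis
    qed
    have e3: "f (x1,x2+h2) \<le> f (x1,x2)"
    proof -
      have "grid_vertex a b n i (j+1) \<in> grid_circle a b n r i j" using j2 ij(1) r by (intro inC) auto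
      moreover have "grid_vertex a b n i (j+1) = (x1,x2+h2)" unfolding gv x1_def x2_def by (simp add: algebra_simps)
      ultimately show ?thesis using mx by metis
    qed
    have e4: "f (x1,x2-h2) \<le> f (x1,x2)"
    proof -
      have "grid_vertex a b n i (j-1) \<in> grid_circle a b n r i j" using j1 ij(1,2) r by (intro inC) auto
      moreover have "grid_vertex a b n i (j-1) = (x1,x2-h2)" unfolding gv x1_def x2_def using j1
        by (simp add: of_nat_diff algebra_simps)
      ultimately show ?thesis using mx by metis
    qed
    have g1: "\<bar>F1 (x1,x2)\<bar> \<le> M*h1" using grad1[of x1 x2 h1] xu h1p h1c C1 e1 e2 by linarith
    have g2: "\<bar>F2 (x1,x2)\<bar> \<le> M*h2" using grad2[of x2 x1 h2] xu h2p h2c C1 e3 e4 by linarith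
    have "M*h1 \<le> M*hc" "M*h2 \<le> M*hc" using h1c h2c Mpos by simp_all
    hence "\<bar>F1 (x1,x2)\<bar> \<le> M*hc" "\<bar>F2 (x1,x2)\<bar> \<le> M*hc" using g1 g2 by linarith+
    from localize[of x1 x2 hc, OF _ _ this] xu show ?thesis unfolding x1_def x2_def by linarith
  qed
  define K where "K = {ij::nat\<times>nat. fst ij \<le> n \<and> snd ij \<le> n \<and> \<bar>real (fst ij) * h1 - p1\<bar> \<le> \<delta> \<and> \<bar>real (snd ij) * h2 - p2\<bar> \<le> \<delta>}"
  define Fv where "Fv = (\<lambda>ij. f (grid_vertex a b n (fst ij) (snd ij)))"
  have finK: "finite K"
    by (rule finite_subset[of _ "{..n} \<times> {..n}"]) (auto simp: K_def)
  obtain i0 where i0: "i0 \<le> n" "\<bar>real i0 * h1 - p1\<bar> \<le> h1"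
    using near_index[of h1 p1 n] h1p bx dpos na by auto
  obtain j0 where j0: "j0 \<le> n" "\<bar>real j0 * h2 - p2\<bar> \<le> h2"
    using near_index[of h2 p2 n] h2p bx dpos nb by auto
  have "(i0,j0) \<in> K" unfolding K_def using i0 j0 h1c h2c C1 dpos by auto
  hence Kne: "K \<noteq> {}" by blast
  have "Max (Fv ` K) \<in> Fv ` K" using finK Kne by simp
  then obtain ij where ijK: "ij \<in> K" and ijM: "Fv ij = Max (Fv ` K)" by auto
  have ijmax: "\<And>q. q \<in> K \<Longrightarrow> Fv q \<le> Fv ij"
    unfolding ijM using finK by (intro Max_ge) auto
  obtain i j where ijs: "ij = (i,j)" by (cases ij)
  define x1 where "x1 = real i * h1"
  define x2 where "x2 = real j * h2"
  have ijn: "i \<le> n" "j \<le> n" and xK: "\<bar>x1 - p1\<bar> \<le> \<delta>" "\<bar>x2 - p2\<bar> \<le> \<delta>"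
    using ijK unfolding K_def ijs x1_def x2_def by auto
  have Fvij: "Fv (i,j) = f (x1,x2)" unfolding Fv_def gv x1_def x2_def by simp
  have inU: "\<bar>x1 - p1\<bar> < \<delta>/2 \<and> \<bar>x2 - p2\<bar> < \<delta>/2"
  proof (rule ccontr)
    assume nU: "\<not> (\<bar>x1 - p1\<bar> < \<delta>/2 \<and> \<bar>x2 - p2\<bar> < \<delta>/2)"
    have "(\<delta>/2)^2 \<le> (x1-p1)^2 + (x2-p2)^2"
    proof (cases "\<bar>x1 - p1\<bar> \<ge> \<delta>/2")
      case True
      hence "(\<delta>/2)^2 \<le> \<bar>x1 - p1\<bar>^2" using dpos by (intro power_mono) auto
      moreover have "0 \<le> (x2-p2)^2" "0 \<le> (x1-p1)^2" "\<bar>x1-p1\<bar>^2 = (x1-p1)^2" "\<bar>x2-p2\<bar>^2 = (x2-p2)^2" by simp_all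
      ultimately show ?thesis by linarith
    next
      case False
      hence "\<bar>x2 - p2\<bar> \<ge> \<delta>/2" using nU by auto
      hence "(\<delta>/2)^2 \<le> \<bar>x2 - p2\<bar>^2" using dpos by (intro power_mono) auto
      moreover have "0 \<le> (x2-p2)^2" "0 \<le> (x1-p1)^2" "\<bar>x1-p1\<bar>^2 = (x1-p1)^2" "\<bar>x2-p2\<bar>^2 = (x2-p2)^2" by simp_all
      ultimately show ?thesis by linarith
    qed
    hence "lam * (\<delta>/2)^2 \<le> lam * ((x1-p1)^2 + (x2-p2)^2)" using lpos by (intro mult_left_mono) auto
    hence "F1 (x1,x2)*(x1-p1) + F2 (x1,x2)*(x2-p2) \<le> - lam*\<delta>^2/4"
      using mono[OF xK] by (simp add: power_divide)
    hence "F1 (x1,x2)*(x1-p1) \<le> -lam*\<delta>^2/8 \<or> F2 (x1,x2)*(x2-p2) \<le> -lam*\<delta>^2/8" by linarith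
    moreover have pos: "lam*\<delta>^2/8 > 0" using lpos dpos by simp
    moreover have Mh1: "M*h1 < lam*\<delta>/8"
    proof - have "M*h1 \<le> M*hc" using h1c Mpos by (intro mult_left_mono) auto
      thus ?thesis using C3 by linarith qed
    moreover have Mh2: "M*h2 < lam*\<delta>/8"
    proof - have "M*h2 \<le> M*hc" using h2c Mpos by (intro mult_left_mono) auto
      thus ?thesis using C3 by linarith qed
    ultimately show False
    proof (elim disjE)
      assume F: "F1 (x1,x2)*(x1-p1) \<le> -lam*\<delta>^2/8"
      have "x1 \<noteq> p1" using F pos by auto
      then consider "x1 > p1" | "x1 < p1" by linarith
      then show False
      proof cases
        case 1
        have i1: "i \<ge> 1" proof (rule ccontr) assume "\<not> i \<ge> 1" hence "i=0" by simp
          thus False using 1 bx dpos unfolding x1_def by simp qed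
        have y: "\<bar>x1 - h1 - p1\<bar> \<le> \<delta>" using 1 xK h1c C1 h1p by linarith
        have "f (x1 - h1, x2) > f (x1,x2)"
          using improve1[OF xK F h1p _ Mh1 y] 1 h1c C1 dpos by linarith
        moreover have "(i-1,j) \<in> K" unfolding K_def using ijn y i1 xK
          by (simp add: of_nat_diff algebra_simps x1_def x2_def)
        moreover have "Fv (i-1,j) = f (x1 - h1, x2)" unfolding Fv_def gv x1_def x2_def using i1
          by (simp add: of_nat_diff algebra_simps)
        ultimately show False using ijmax[of "(i-1,j)"] Fvij ijs by simp
      next
        case 2
        have i2: "i + 1 \<le> n"
        proof (rule ccontr)
          assume "\<not> i + 1 \<le> n" hence "real n \<le> real i" by simp
          hence "real n * h1 \<le> real i * h1" using h1p by (intro mult_right_mono) auto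
      hence "a \<le> x1" unfolding x1_def using na by simp
          thus False using 2 bx dpos by linarith
        qed
        have y: "\<bar>x1 + h1 - p1\<bar> \<le> \<delta>" using 2 xK h1c C1 h1p by linarith
        have "f (x1 + h1, x2) > f (x1,x2)"
          using improve1[OF xK F h1p _ Mh1 y] 2 h1c C1 dpos by linarith
        moreover have "(i+1,j) \<in> K" unfolding K_def using i2 ijn y xK
          by (simp add: algebra_simps x1_def x2_def)
        moreover have "Fv (i+1,j) = f (x1 + h1, x2)" unfolding Fv_def gv x1_def x2_def
          by (simp add: algebra_simps)
        ultimately show False using ijmax[of "(i+1,j)"] Fvij ijs by simp
      qed
    next
      assume F: "F2 (x1,x2)*(x2-p2) \<le> -lam*\<delta>^2/8"
      have "x2 \<noteq> p2" using F pos by auto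
      then consider "x2 > p2" | "x2 < p2" by linarith
      then show False
      proof cases
        case 1
        have j1: "j \<ge> 1" proof (rule ccontr) assume "\<not> j \<ge> 1" hence "j=0" by simp
          thus False using 1 bx dpos unfolding x2_def by simp qed
        have y: "\<bar>x2 - h2 - p2\<bar> \<le> \<delta>" using 1 xK h2c C1 h2p by linarith
        have "f (x1, x2 - h2) > f (x1,x2)"
          using improve2[OF xK F h2p _ Mh2 y] 1 h2c C1 dpos by linarith
        moreover have "(i,j-1) \<in> K" unfolding K_def using ijn y j1 xK
          by (simp add: of_nat_diff algebra_simps x1_def x2_def)
        moreover have "Fv (i,j-1) = f (x1, x2 - h2)" unfolding Fv_def gv x1_def x2_def using j1
          by (simp add: of_nat_diff algebra_simps)
        ultimately show False using ijmax[of "(i,j-1)"] Fvij ijs by simp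
      next
        case 2
        have j2: "j + 1 \<le> n"
        proof (rule ccontr)
          assume "\<not> j + 1 \<le> n" hence "real n \<le> real j" by simp
          hence "real n * h2 \<le> real j * h2" using h2p by (intro mult_right_mono) auto
      hence "b \<le> x2" unfolding x2_def using nb by simp
          thus False using 2 bx dpos by linarith
        qed
        have y: "\<bar>x2 + h2 - p2\<bar> \<le> \<delta>" using 2 xK h2c C1 h2p by linarith
        have "f (x1, x2 + h2) > f (x1,x2)"
          using improve2[OF xK F h2p _ Mh2 y] 2 h2c C1 dpos by linarith
        moreover have "(i,j+1) \<in> K" unfolding K_def using j2 ijn y xK
          by (simp add: algebra_simps x1_def x2_def)
        moreover have "Fv (i,j+1) = f (x1, x2 + h2)" unfolding Fv_def gv x1_def x2_def
          by (simp add: algebra_simps)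
        ultimately show False using ijmax[of "(i,j+1)"] Fvij ijs by simp
      qed
    qed
  qed
  have exU: "grid_vertex a b n i j \<in> U" unfolding U gv using inU unfolding x1_def x2_def abs_less_iff by auto
  have exM: "maximal_in_circle a b f n r i j"
    unfolding maximal_in_circle_def
  proof
    fix q assume "q \<in> grid_circle a b n r i j"
    then obtain l m where lm: "q = grid_vertex a b n l m" "l \<le> n" "m \<le> n"
       "\<bar>real l - real i\<bar> \<le> real r" "\<bar>real m - real j\<bar> \<le> real r" using circ by blast
    have "\<bar>real l * h1 - real i * h1\<bar> = \<bar>real l - real i\<bar> * h1"
      using h1p by (simp add: abs_mult left_diff_distrib[symmetric])
    also have "\<dots> \<le> real r * h1" using lm h1p by (intro mult_right_mono) auto
    also have "\<dots> \<le> real r * hc" using h1c by (intro mult_left_mono) auto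
    finally have aa: "\<bar>real l * h1 - real i * h1\<bar> \<le> real r * hc" .
    have l1: "\<bar>real l * h1 - p1\<bar> \<le> \<delta>" using aa inU C2 unfolding x1_def by arith
    have "\<bar>real m * h2 - real j * h2\<bar> = \<bar>real m - real j\<bar> * h2"
      using h2p by (simp add: abs_mult left_diff_distrib[symmetric])
    also have "\<dots> \<le> real r * h2" using lm h2p by (intro mult_right_mono) auto
    also have "\<dots> \<le> real r * hc" using h2c by (intro mult_left_mono) auto
    finally have aa: "\<bar>real m * h2 - real j * h2\<bar> \<le> real r * hc" .
    have l2: "\<bar>real m * h2 - p2\<bar> \<le> \<delta>" using aa inU C2 unfolding x2_def by arith
    have "(l,m) \<in> K" unfolding K_def using lm l1 l2 by simp
    hence "Fv (l,m) \<le> Fv (i,j)" using ijmax ijs by simp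
    thus "f q \<le> f (grid_vertex a b n i j)" unfolding Fv_def lm(1) by simp
  qed
  show ?thesis
  proof (rule ex_ex1I)
    show "\<exists>ij. fst ij \<le> n \<and> snd ij \<le> n \<and> grid_vertex a b n (fst ij) (snd ij) \<in> U \<and>
                  maximal_in_circle a b f n r (fst ij) (snd ij)"
      using ijn exU exM by (intro exI[of _ "(i,j)"]) simp
  next
    fix u v :: "nat \<times> nat"
    assume u: "fst u \<le> n \<and> snd u \<le> n \<and> grid_vertex a b n (fst u) (snd u) \<in> U \<and>
                  maximal_in_circle a b f n r (fst u) (snd u)"
       and v: "fst v \<le> n \<and> snd v \<le> n \<and> grid_vertex a b n (fst v) (snd v) \<in> U \<and>
                  maximal_in_circle a b f n r (fst v) (snd v)"
    obtain i j where uu: "u = (i,j)" by (cases u)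
    obtain l m where vv: "v = (l,m)" by (cases v)
    have u': "i \<le> n" "j \<le> n" "grid_vertex a b n i j \<in> U" "maximal_in_circle a b f n r i j" using u uu by auto
    have v': "l \<le> n" "m \<le> n" "grid_vertex a b n l m \<in> U" "maximal_in_circle a b f n r l m" using v vv by auto
    have nu: "\<bar>real i * h1 - p1\<bar> + \<bar>real j * h2 - p2\<bar> \<le> 2*M*hc/lam" using near[OF u'] .
    have nv: "\<bar>real l * h1 - p1\<bar> + \<bar>real m * h2 - p2\<bar> \<le> 2*M*hc/lam" using near[OF v'] .
    have "\<bar>real l - real i\<bar> * h1 \<le> real r * h1"
    proof -
      have "\<bar>real l - real i\<bar> * h1 = \<bar>real l * h1 - real i * h1\<bar>" using h1p
        by (simp add: abs_mult left_diff_distrib[symmetric])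
      also have "\<dots> \<le> 4*M*hc/lam" using nu nv by linarith
      finally show ?thesis using C4 by linarith
    qed
    hence d1: "\<bar>real l - real i\<bar> \<le> real r" using h1p by simp
    have "\<bar>real m - real j\<bar> * h2 \<le> real r * h2"
    proof -
      have "\<bar>real m - real j\<bar> * h2 = \<bar>real m * h2 - real j * h2\<bar>" using h2p
        by (simp add: abs_mult left_diff_distrib[symmetric])
      also have "\<dots> \<le> 4*M*hc/lam" using nu nv by linarith
      finally show ?thesis using C4 by linarith
    qed
    hence d2: "\<bar>real m - real j\<bar> \<le> real r" using h2p by simp
    have "grid_vertex a b n l m \<in> grid_circle a b n r i j" using inC[OF v'(1,2) d1 d2] .
    hence f1: "f (grid_vertex a b n l m) \<le> f (grid_vertex a b n i j)" using u'(4) unfolding maximal_in_circle_def by blast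
    have "grid_vertex a b n i j \<in> grid_circle a b n r l m" using inC[OF u'(1,2)] d1 d2 by (simp add: abs_minus_commute)
    hence f2: "f (grid_vertex a b n i j) \<le> f (grid_vertex a b n l m)" using v'(4) unfolding maximal_in_circle_def by blast
    have "grid_vertex a b n i j = grid_vertex a b n l m"
      using nd u'(1,2) v'(1,2) f1 f2 unfolding nondegenerate_def by force
    hence "real i * h1 = real l * h1" "real j * h2 = real m * h2" unfolding gv by auto
    hence "i = l" "j = m" using h1p h2p by auto
    thus "u = v" using uu vv by simp
  qed
qed

end



context gs begin

lemma grid_main:
  "\<exists>U. open U \<and> (p1,p2) \<in> U \<and> (\<exists>r::nat. r > 0 \<and> (\<exists>N. \<forall>n\<ge>N. nondegenerate a b f n \<longrightarrow>
           (\<exists>!ij. fst ij \<le> n \<and> snd ij \<le> n \<and> grid_vertex a b n (fst ij) (snd ij) \<in> U \<and>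
                  maximal_in_circle a b f n r (fst ij) (snd ij))))"
proof -
  define c where "c = max a b"
  define m where "m = min a b"
  have cpos: "c > 0" and mpos: "m > 0" and ma: "m \<le> a" and mb: "m \<le> b"
    using apos bpos by (auto simp: c_def m_def)
  define r :: nat where "r = nat \<lceil>4*M*c/(lam*m)\<rceil> + 1"
  have r1: "r \<ge> 1" unfolding r_def by simp
  have rge: "real r \<ge> 4*M*c/(lam*m)" unfolding r_def by linarith
  have rpos: "real r > 0" using r1 by simp
  define \<kappa> where "\<kappa> = min (\<delta>/2) (min (\<delta>/(2*real r)) (lam*\<delta>/(16*M)))"
  have kpos: "\<kappa> > 0" unfolding \<kappa>_def using dpos rpos lpos Mpos by simp
  define N :: nat where "N = nat \<lceil>c/\<kappa>\<rceil> + 1"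
  define U where "U = {p1-\<delta>/2<..<p1+\<delta>/2} \<times> {p2-\<delta>/2<..<p2+\<delta>/2}"
  have oU: "open U" unfolding U_def by (intro open_Times open_greaterThanLessThan)
  have pU: "(p1,p2) \<in> U" unfolding U_def using dpos by auto
  have main: "\<forall>n\<ge>N. nondegenerate a b f n \<longrightarrow>
           (\<exists>!ij. fst ij \<le> n \<and> snd ij \<le> n \<and> grid_vertex a b n (fst ij) (snd ij) \<in> U \<and>
                  maximal_in_circle a b f n r (fst ij) (snd ij))"
  proof (intro allI impI)
    fix n assume nN: "N \<le> n" and nd: "nondegenerate a b f n"
    have "real N > c/\<kappa>" unfolding N_def by linarith
    moreover have "real N \<le> real n" using nN by simp
    ultimately have nc: "real n > c/\<kappa>" by linarith
    have npos: "n > 0" using nN N_def by simp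
    have rn: "real n > 0" using npos by simp
    define hc where "hc = max (a / real n) (b / real n)"
    have d1: "a \<le> b \<Longrightarrow> a / real n \<le> b / real n" "b \<le> a \<Longrightarrow> b / real n \<le> a / real n"
      using rn by (simp_all add: divide_right_mono)
    have hcc: "hc = c / real n" unfolding hc_def c_def using d1
      by (cases "a \<le> b") (auto simp: max_def)
    have hk: "hc < \<kappa>" unfolding hcc using nc kpos rn by (simp add: divide_less_eq field_simps)
    have C1: "hc \<le> \<delta>/2" using hk unfolding \<kappa>_def by linarith
    have hk2: "hc \<le> \<delta>/(2*real r)" using hk unfolding \<kappa>_def by linarith
    have C2: "real r * hc \<le> \<delta>/2"
    proof -
      have "real r * hc \<le> real r * (\<delta>/(2*real r))" using hk2 rpos by (intro mult_left_mono) auto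
      also have "\<dots> = \<delta>/2" using rpos by simp
      finally show ?thesis .
    qed
    have hk3: "hc \<le> lam*\<delta>/(16*M)" using hk unfolding \<kappa>_def by linarith
    have C3: "M * hc < lam*\<delta>/8"
    proof -
      have "M * hc \<le> M * (lam*\<delta>/(16*M))" using hk3 Mpos by (intro mult_left_mono) auto
      also have "\<dots> = lam*\<delta>/16" using Mpos by simp
      also have "\<dots> < lam*\<delta>/8" using lpos dpos by simp
      finally show ?thesis .
    qed
    have base: "4*M*hc/lam \<le> real r * (m / real n)"
    proof -
      have "4*M*hc/lam = (4*M*c/(lam*m)) * (m / real n)" unfolding hcc using mpos lpos rn by (simp add: field_simps)
      also have "\<dots> \<le> real r * (m / real n)" using rge mpos rn by (intro mult_right_mono) auto
      finally show ?thesis .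
    qed
    have "m / real n \<le> a / real n" using ma rn by (simp add: divide_right_mono)
    hence "real r * (m / real n) \<le> real r * (a / real n)" by (intro mult_left_mono) auto
    hence C4a: "4*M*hc/lam \<le> real r * (a / real n)" using base by linarith
    have "m / real n \<le> b / real n" using mb rn by (simp add: divide_right_mono)
    hence "real r * (m / real n) \<le> real r * (b / real n)" by (intro mult_left_mono) auto
    hence C4b: "4*M*hc/lam \<le> real r * (b / real n)" using base by linarith
    show "\<exists>!ij. fst ij \<le> n \<and> snd ij \<le> n \<and> grid_vertex a b n (fst ij) (snd ij) \<in> U \<and>
                  maximal_in_circle a b f n r (fst ij) (snd ij)"
      by (rule grid_n[OF npos refl refl hc_def r1 C1 C2 C3 C4a C4b U_def nd])
  qed
  have "r > 0" using r1 by simp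
  then show ?thesis using oU pU main by blast
qed

end



lemma dpd1: "(\<lambda>t. g (t, y)) differentiable (at x) \<Longrightarrow> DERIV (\<lambda>t. g (t,y)) x :> pd1 g (x,y)"
  by (simp add: pd1_def DERIV_deriv_iff_real_differentiable)

lemma dpd2: "(\<lambda>t. g (x, t)) differentiable (at y) \<Longrightarrow> DERIV (\<lambda>t. g (x,t)) y :> pd2 g (x,y)"
  by (simp add: pd2_def DERIV_deriv_iff_real_differentiable)

lemma cont_box:
  fixes F :: "real \<times> real \<Rightarrow> real"
  assumes "continuous_on S F" "open S" "p \<in> S" "e > 0"
  shows "\<exists>d>0. \<forall>x1 x2. \<bar>x1 - fst p\<bar> \<le> d \<longrightarrow> \<bar>x2 - snd p\<bar> \<le> d \<longrightarrow> \<bar>F (x1,x2) - F p\<bar> < e"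
proof -
  have "isCont F p" using assms continuous_on_eq_continuous_at by blast
  then obtain d where d: "d > 0" "\<And>x'. dist x' p < d \<Longrightarrow> dist (F x') (F p) < e"
    using assms(4) unfolding continuous_at_eps_delta by blast
  show ?thesis
  proof (intro exI[of _ "d/3"] conjI allI impI)
    show "d/3 > 0" using d by simp
    fix x1 x2 assume h: "\<bar>x1 - fst p\<bar> \<le> d/3" "\<bar>x2 - snd p\<bar> \<le> d/3"
    have "dist (x1,x2) p = sqrt ((dist x1 (fst p))^2 + (dist x2 (snd p))^2)"
      by (metis dist_Pair_Pair prod.collapse)
    also have "\<dots> \<le> \<bar>dist x1 (fst p)\<bar> + \<bar>dist x2 (snd p)\<bar>" by (rule sqrt_sum_squares_le_sum_abs)
    also have "\<dots> < d" using h d by (simp add: dist_real_def)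
    finally show "\<bar>F (x1,x2) - F p\<bar> < e" using d(2) by (simp add: dist_real_def)
  qed
qed

theorem theorem1:
  fixes a b :: real and f :: "real \<times> real \<Rightarrow> real" and p :: "real \<times> real"
  assumes "a > 0" and "b > 0"
    and C3: "Ck 3 ({0<..<a} \<times> {0<..<b}) f"
    and interior: "p \<in> {0<..<a} \<times> {0<..<b}"
    and locmax: "\<exists>e>0. \<forall>q\<in>{0..a} \<times> {0..b}. dist q p < e \<longrightarrow> f q \<le> f p"
    and negdef: "negative_definite (hessian f p)"
  shows "\<exists>U. open U \<and> p \<in> U \<and> (\<exists>r::nat. r > 0 \<and> (\<exists>N. \<forall>n\<ge>N. nondegenerate a b f n \<longrightarrow>
           (\<exists>!ij. fst ij \<le> n \<and> snd ij \<le> n \<and> grid_vertex a b n (fst ij) (snd ij) \<in> U \<and>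
                  maximal_in_circle a b f n r (fst ij) (snd ij))))"
proof -
  obtain p1 p2 where p: "p = (p1,p2)" by (cases p)
  define S where "S = {0<..<a} \<times> {0<..<b}"
  have oS: "open S" unfolding S_def by (intro open_Times open_greaterThanLessThan)
  have pS: "p \<in> S" using interior S_def by simp
  have pin: "0 < p1" "p1 < a" "0 < p2" "p2 < b" using interior p by auto
  have c3: "Ck (Suc (Suc (Suc 0))) S f" using C3 unfolding S_def by (simp add: numeral_3_eq_3)
  hence df: "\<forall>x\<in>S. (\<lambda>t. f (t, snd x)) differentiable (at (fst x)) \<and> (\<lambda>t. f (fst x, t)) differentiable (at (snd x))"
    and c1: "Ck (Suc (Suc 0)) S (pd1 f)" and c2: "Ck (Suc (Suc 0)) S (pd2 f)" by simp_all
  from c1 have df1: "\<forall>x\<in>S. (\<lambda>t. pd1 f (t, snd x)) differentiable (at (fst x)) \<and> (\<lambda>t. pd1 f (fst x, t)) differentiable (at (snd x))"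
    and cont11: "continuous_on S (pd1 (pd1 f))" and cont12: "continuous_on S (pd2 (pd1 f))" by simp_all
  from c2 have df2: "\<forall>x\<in>S. (\<lambda>t. pd2 f (t, snd x)) differentiable (at (fst x)) \<and> (\<lambda>t. pd2 f (fst x, t)) differentiable (at (snd x))"
    and cont21: "continuous_on S (pd1 (pd2 f))" and cont22: "continuous_on S (pd2 (pd2 f))" by simp_all
  have D1: "\<And>x1 x2. (x1,x2) \<in> S \<Longrightarrow> DERIV (\<lambda>t. f (t,x2)) x1 :> pd1 f (x1,x2)"
    using df by (intro dpd1) force
  have D2: "\<And>x1 x2. (x1,x2) \<in> S \<Longrightarrow> DERIV (\<lambda>t. f (x1,t)) x2 :> pd2 f (x1,x2)"
    using df by (intro dpd2) force
  have D11: "\<And>x1 x2. (x1,x2) \<in> S \<Longrightarrow> DERIV (\<lambda>t. pd1 f (t,x2)) x1 :> pd1 (pd1 f) (x1,x2)"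
    using df1 by (intro dpd1) force
  have D12: "\<And>x1 x2. (x1,x2) \<in> S \<Longrightarrow> DERIV (\<lambda>t. pd1 f (x1,t)) x2 :> pd2 (pd1 f) (x1,x2)"
    using df1 by (intro dpd2) force
  have D21: "\<And>x1 x2. (x1,x2) \<in> S \<Longrightarrow> DERIV (\<lambda>t. pd2 f (t,x2)) x1 :> pd1 (pd2 f) (x1,x2)"
    using df2 by (intro dpd1) force
  have D22: "\<And>x1 x2. (x1,x2) \<in> S \<Longrightarrow> DERIV (\<lambda>t. pd2 f (x1,t)) x2 :> pd2 (pd2 f) (x1,x2)"
    using df2 by (intro dpd2) force
  define h11 where "h11 = pd1 (pd1 f) p"
  define h12 where "h12 = pd2 (pd1 f) p"
  define h21 where "h21 = pd1 (pd2 f) p"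
  define h22 where "h22 = pd2 (pd2 f) p"
  have Qs: "h11*x*x + (h12+h21)*x*y + h22*y*y < 0" if "x \<noteq> 0 \<or> y \<noteq> 0" for x y
  proof -
    define u :: "nat \<Rightarrow> real" where "u = (\<lambda>i. if i = 0 then x else y)"
    have "\<exists>i<2. u i \<noteq> 0" 
    proof (cases "x \<noteq> 0")
      case True thus ?thesis by (intro exI[of _ 0]) (simp add: u_def)
    next
      case False thus ?thesis using that by (intro exI[of _ 1]) (simp add: u_def)
    qed
    hence "(\<Sum>i<2. \<Sum>j<2. u i * hessian f p i j * u j) < 0" using negdef unfolding negative_definite_def by blast
    moreover have "(\<Sum>i<2. \<Sum>j<2. u i * hessian f p i j * u j) = h11*x*x + (h12+h21)*x*y + h22*y*y"
      by (simp add: numeral_2_eq_2 u_def hessian_def pd_def h11_def h12_def h21_def h22_def algebra_simps)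
    ultimately show ?thesis by simp
  qed
  obtain l0 where l0: "l0 > 0" "\<And>x y. h11*x*x + (h12+h21)*x*y + h22*y*y \<le> - l0 * (x^2 + y^2)"
    using quad_negdef[of h11 "h12+h21" h22] Qs by blast
  define \<epsilon> where "\<epsilon> = l0/4"
  have epos: "\<epsilon> > 0" using l0 by (simp add: \<epsilon>_def)
  obtain e11 where e11: "e11 > 0" "\<forall>x1 x2. \<bar>x1 - p1\<bar> \<le> e11 \<longrightarrow> \<bar>x2 - p2\<bar> \<le> e11 \<longrightarrow> \<bar>pd1 (pd1 f) (x1,x2) - h11\<bar> < \<epsilon>"
    using cont_box[OF cont11 oS pS epos] unfolding h11_def p by auto
  obtain e12 where e12: "e12 > 0" "\<forall>x1 x2. \<bar>x1 - p1\<bar> \<le> e12 \<longrightarrow> \<bar>x2 - p2\<bar> \<le> e12 \<longrightarrow> \<bar>pd2 (pd1 f) (x1,x2) - h12\<bar> < \<epsilon>"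
    using cont_box[OF cont12 oS pS epos] unfolding h12_def p by auto
  obtain e21 where e21: "e21 > 0" "\<forall>x1 x2. \<bar>x1 - p1\<bar> \<le> e21 \<longrightarrow> \<bar>x2 - p2\<bar> \<le> e21 \<longrightarrow> \<bar>pd1 (pd2 f) (x1,x2) - h21\<bar> < \<epsilon>"
    using cont_box[OF cont21 oS pS epos] unfolding h21_def p by auto
  obtain e22 where e22: "e22 > 0" "\<forall>x1 x2. \<bar>x1 - p1\<bar> \<le> e22 \<longrightarrow> \<bar>x2 - p2\<bar> \<le> e22 \<longrightarrow> \<bar>pd2 (pd2 f) (x1,x2) - h22\<bar> < \<epsilon>"
    using cont_box[OF cont22 oS pS epos] unfolding h22_def p by auto
  define \<delta> where "\<delta> = min (min (min e11 e12) (min e21 e22)) (min (min (p1/2) ((a-p1)/2)) (min (p2/2) ((b-p2)/2)))"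
  have dpos: "\<delta> > 0" unfolding \<delta>_def using e11 e12 e21 e22 pin by simp
  have dle: "\<delta> \<le> e11" "\<delta> \<le> e12" "\<delta> \<le> e21" "\<delta> \<le> e22" "\<delta> \<le> p1/2" "\<delta> \<le> (a-p1)/2" "\<delta> \<le> p2/2" "\<delta> \<le> (b-p2)/2"
    unfolding \<delta>_def by linarith+
  have inS: "(x1,x2) \<in> S" if "\<bar>x1-p1\<bar> \<le> \<delta>" "\<bar>x2-p2\<bar> \<le> \<delta>" for x1 x2
    proof -
    have "0 < x1" "x1 < a" "0 < x2" "x2 < b" using that dle pin by (simp_all add: abs_le_iff)
    thus ?thesis unfolding S_def by simp
  qed
  have z1: "pd1 f (p1,p2) = 0"
  proof -
    obtain e where e: "e > 0" "\<forall>q\<in>{0..a} \<times> {0..b}. dist q p < e \<longrightarrow> f q \<le> f p" using locmax by blast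
    show ?thesis
    proof (rule DERIV_local_max[OF D1[OF pS[unfolded p]]])
      show "0 < min e (min p1 (a-p1))" using e pin by simp
      show "\<forall>y. \<bar>p1 - y\<bar> < min e (min p1 (a - p1)) \<longrightarrow> f (y, p2) \<le> f (p1, p2)"
      proof (intro allI impI)
        fix y assume y: "\<bar>p1 - y\<bar> < min e (min p1 (a - p1))"
        have "(y,p2) \<in> {0..a} \<times> {0..b}" using y pin by auto
        moreover have "dist (y,p2) p < e" using y unfolding p by (simp add: dist_Pair_Pair dist_real_def abs_minus_commute)
        ultimately show "f (y, p2) \<le> f (p1, p2)" using e p by blast
      qed
    qed
  qed
  have z2: "pd2 f (p1,p2) = 0"
  proof -
    obtain e where e: "e > 0" "\<forall>q\<in>{0..a} \<times> {0..b}. dist q p < e \<longrightarrow> f q \<le> f p" using locmax by blast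
    show ?thesis
    proof (rule DERIV_local_max[OF D2[OF pS[unfolded p]]])
      show "0 < min e (min p2 (b-p2))" using e pin by simp
      show "\<forall>y. \<bar>p2 - y\<bar> < min e (min p2 (b - p2)) \<longrightarrow> f (p1, y) \<le> f (p1, p2)"
      proof (intro allI impI)
        fix y assume y: "\<bar>p2 - y\<bar> < min e (min p2 (b - p2))"
        have "(p1,y) \<in> {0..a} \<times> {0..b}" using y pin by auto
        moreover have "dist (p1,y) p < e" using y unfolding p by (simp add: dist_Pair_Pair dist_real_def abs_minus_commute)
        ultimately show "f (p1, y) \<le> f (p1, p2)" using e p by blast
      qed
    qed
  qed
  have monoL: "pd1 f (x1,x2) * (x1-p1) + pd2 f (x1,x2) * (x2-p2) \<le> -(l0/2)*((x1-p1)^2+(x2-p2)^2)"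
    if x: "\<bar>x1-p1\<bar> \<le> \<delta>" "\<bar>x2-p2\<bar> \<le> \<delta>" for x1 x2
  proof -
    have hD11: "\<And>x1 x2. \<bar>x1-p1\<bar> \<le> \<delta> \<Longrightarrow> \<bar>x2-p2\<bar> \<le> \<delta> \<Longrightarrow> DERIV (\<lambda>t. pd1 f (t,x2)) x1 :> pd1 (pd1 f) (x1,x2)"
      using D11 inS by blast
    have hD12: "\<And>x1 x2. \<bar>x1-p1\<bar> \<le> \<delta> \<Longrightarrow> \<bar>x2-p2\<bar> \<le> \<delta> \<Longrightarrow> DERIV (\<lambda>t. pd1 f (x1,t)) x2 :> pd2 (pd1 f) (x1,x2)"
      using D12 inS by blast
    have hD21: "\<And>x1 x2. \<bar>x1-p1\<bar> \<le> \<delta> \<Longrightarrow> \<bar>x2-p2\<bar> \<le> \<delta> \<Longrightarrow> DERIV (\<lambda>t. pd2 f (t,x2)) x1 :> pd1 (pd2 f) (x1,x2)"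
      using D21 inS by blast
    have hD22: "\<And>x1 x2. \<bar>x1-p1\<bar> \<le> \<delta> \<Longrightarrow> \<bar>x2-p2\<bar> \<le> \<delta> \<Longrightarrow> DERIV (\<lambda>t. pd2 f (x1,t)) x2 :> pd2 (pd2 f) (x1,x2)"
      using D22 inS by blast
    have hE11: "\<And>x1 x2. \<bar>x1-p1\<bar> \<le> \<delta> \<Longrightarrow> \<bar>x2-p2\<bar> \<le> \<delta> \<Longrightarrow> \<bar>pd1 (pd1 f) (x1,x2) - h11\<bar> \<le> \<epsilon>"
      using e11 dle by (meson less_imp_le order_trans)
    have hE12: "\<And>x1 x2. \<bar>x1-p1\<bar> \<le> \<delta> \<Longrightarrow> \<bar>x2-p2\<bar> \<le> \<delta> \<Longrightarrow> \<bar>pd2 (pd1 f) (x1,x2) - h12\<bar> \<le> \<epsilon>"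
      using e12 dle by (meson less_imp_le order_trans)
    have hE21: "\<And>x1 x2. \<bar>x1-p1\<bar> \<le> \<delta> \<Longrightarrow> \<bar>x2-p2\<bar> \<le> \<delta> \<Longrightarrow> \<bar>pd1 (pd2 f) (x1,x2) - h21\<bar> \<le> \<epsilon>"
      using e21 dle by (meson less_imp_le order_trans)
    have hE22: "\<And>x1 x2. \<bar>x1-p1\<bar> \<le> \<delta> \<Longrightarrow> \<bar>x2-p2\<bar> \<le> \<delta> \<Longrightarrow> \<bar>pd2 (pd2 f) (x1,x2) - h22\<bar> \<le> \<epsilon>"
      using e22 dle by (meson less_imp_le order_trans)

    have "pd1 f (x1,x2) * (x1-p1) + pd2 f (x1,x2) * (x2-p2) \<le> (2*\<epsilon> - l0) * ((x1-p1)^2+(x2-p2)^2)"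
      by (rule mono_lemma[OF hD11 hD12 hD21 hD22 hE11 hE12 hE21 hE22 l0(2) z1 z2 x])
    moreover have "2*\<epsilon> - l0 = -(l0/2)" unfolding \<epsilon>_def by simp
    ultimately show ?thesis by simp
  qed
  define M where "M = \<bar>h11\<bar> + \<bar>h22\<bar> + \<epsilon> + 1"
  have Mpos: "M > 0" unfolding M_def using epos by simp
  have B11: "\<bar>pd1 (pd1 f) (x1,x2)\<bar> \<le> M" if "\<bar>x1-p1\<bar> \<le> \<delta>" "\<bar>x2-p2\<bar> \<le> \<delta>" for x1 x2
  proof -
    have "\<bar>pd1 (pd1 f) (x1,x2) - h11\<bar> < \<epsilon>" using e11(2) that dle by (meson order_trans)
    thus ?thesis unfolding M_def by linarith
  qed
  have B22: "\<bar>pd2 (pd2 f) (x1,x2)\<bar> \<le> M" if "\<bar>x1-p1\<bar> \<le> \<delta>" "\<bar>x2-p2\<bar> \<le> \<delta>" for x1 x2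
  proof -
    have "\<bar>pd2 (pd2 f) (x1,x2) - h22\<bar> < \<epsilon>" using e22(2) that dle by (meson order_trans)
    thus ?thesis unfolding M_def by linarith
  qed
  interpret G: gs a b f "pd1 f" "pd2 f" "pd1 (pd1 f)" "pd2 (pd2 f)" p1 p2 \<delta> M "l0/2"
  proof
    show "0 < a" "0 < b" "0 < \<delta>" "0 < M" "0 < l0/2" using assms dpos Mpos l0 by simp_all
    show "\<delta> < p1" using dle pin dpos by linarith
    have "(a-p1)/2 < a - p1" using pin by simp
    thus "p1 + \<delta> < a" using dle(6) by linarith
    show "\<delta> < p2" using dle pin dpos by linarith
    have "(b-p2)/2 < b - p2" using pin by simp
    thus "p2 + \<delta> < b" using dle(8) by linarith
    show "\<And>x1 x2. \<bar>x1-p1\<bar> \<le> \<delta> \<Longrightarrow> \<bar>x2-p2\<bar> \<le> \<delta> \<Longrightarrow> DERIV (\<lambda>t. f (t,x2)) x1 :> pd1 f (x1,x2)"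
      using D1 inS by blast
    show "\<And>x1 x2. \<bar>x1-p1\<bar> \<le> \<delta> \<Longrightarrow> \<bar>x2-p2\<bar> \<le> \<delta> \<Longrightarrow> DERIV (\<lambda>t. pd1 f (t,x2)) x1 :> pd1 (pd1 f) (x1,x2)"
      using D11 inS by blast
    show "\<And>x1 x2. \<bar>x1-p1\<bar> \<le> \<delta> \<Longrightarrow> \<bar>x2-p2\<bar> \<le> \<delta> \<Longrightarrow> DERIV (\<lambda>t. f (x1,t)) x2 :> pd2 f (x1,x2)"
      using D2 inS by blast
    show "\<And>x1 x2. \<bar>x1-p1\<bar> \<le> \<delta> \<Longrightarrow> \<bar>x2-p2\<bar> \<le> \<delta> \<Longrightarrow> DERIV (\<lambda>t. pd2 f (x1,t)) x2 :> pd2 (pd2 f) (x1,x2)"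
      using D22 inS by blast
    show "\<And>x1 x2. \<bar>x1-p1\<bar> \<le> \<delta> \<Longrightarrow> \<bar>x2-p2\<bar> \<le> \<delta> \<Longrightarrow> \<bar>pd1 (pd1 f) (x1,x2)\<bar> \<le> M"
      using B11 by blast
    show "\<And>x1 x2. \<bar>x1-p1\<bar> \<le> \<delta> \<Longrightarrow> \<bar>x2-p2\<bar> \<le> \<delta> \<Longrightarrow> \<bar>pd2 (pd2 f) (x1,x2)\<bar> \<le> M"
      using B22 by blast
    show "\<And>x1 x2. \<bar>x1-p1\<bar> \<le> \<delta> \<Longrightarrow> \<bar>x2-p2\<bar> \<le> \<delta> \<Longrightarrow>
        pd1 f (x1,x2)*(x1-p1) + pd2 f (x1,x2)*(x2-p2) \<le> -(l0/2)*((x1-p1)^2+(x2-p2)^2)"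
      using monoL by blast
  qed
  show ?thesis using G.grid_main unfolding p .
qed


end
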